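(* For any single unit-demand buyer with value distribution $\mathcal{D}$ over $m$ items and any production cost vector $c\in\mathbb{R}_+^m$, $$\textsc{BuyManyProfit}_{2c}(\mathcal{D})\leq 2\ln(4m)\,\textsc{SProfit}_{c}(\mathcal{D}).$$
   Context: Unit-demand buyer: valuation $v$ with $v_j\ge0$ per item, $v(S)=\max_{j\in S}v_j$; $\mathcal{D}$ arbitrary (correlated across items). Lotteries $\lambda\in\Delta_m=\{\lambda\in[0,1]^m:\sum_j\lambda_j\le1\}$, $v(\lambda)=\sum_jv_j\lambda_j$. A pricing function $p$ assigns a price $p(\lambda)\ge0$ to every lottery; buyer $v$ chooses $\lambda_{v,p}\in\arg\max_\lambda(v(\lambda)-p(\lambda))$ and pays $p(\lambda_{v,p})$. $p$ is buy-many if no buyer type can get higher utility by adaptively purchasing a (random) sequence of lotteries (each depending on previous outcomes), receiving the union of allocated items and paying the sum of prices, than by buying a single lottery. An item pricing is a vector $(q_1,\dots,q_m)\in\mathbb{R}_+^m$, i.e. $q(\lambda)=\sum_jq_j\lambda_j$. Given production costs $c$, the profit of pricing $p$ is $\textsc{Profit}_{p,c}(\mathcal{D})=\mathbb{E}_{v\sim\mathcal{D}}[p(\lambda_{v,p})-c\cdot\lambda_{v,p}]$; $\textsc{SProfit}_c(\mathcal{D})$ is the maximum profit over item pricings, and $\textsc{BuyManyProfit}_c(\mathcal{D})$ the maximum profit over buy-many pricings. *)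

theory Defs
  imports "HOL-Probability.Probability"
begin

(* Items are the elements of a finite type 'i; m = CARD('i).
   Valuations, lotteries, costs and item prices are functions 'i => real. *)

definition lotteries :: "('i::finite \<Rightarrow> real) set" where
  "lotteries = {l. (\<forall>j. 0 \<le> l j) \<and> (\<Sum>j\<in>UNIV. l j) \<le> 1}"

(* v(lambda) = sum_j v_j lambda_j ; also used for c . lambda and item pricings q(lambda) *)
definition lval :: "('i::finite \<Rightarrow> real) \<Rightarrow> ('i \<Rightarrow> real) \<Rightarrow> real" where
  "lval v l = (\<Sum>j\<in>UNIV. v j * l j)"

definition setval :: "('i::finite \<Rightarrow> real) \<Rightarrow> 'i set \<Rightarrow> real" where
  "setval v S = Max (insert 0 (v ` S))"

(* Expected utility of an adaptive purchasing strategy sigma, truncated to at most n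
   purchases.  A history is the list of outcomes of the lotteries bought so far
   (Some j = item j allocated, None = nothing allocated).  sigma h = None means stop,
   sigma h = Some l means buy lottery l next. *)
fun seq_util :: "('i::finite \<Rightarrow> real) \<Rightarrow> (('i \<Rightarrow> real) \<Rightarrow> real)
    \<Rightarrow> ('i option list \<Rightarrow> ('i \<Rightarrow> real) option) \<Rightarrow> nat \<Rightarrow> 'i option list \<Rightarrow> real" where
  "seq_util v p \<sigma> 0 h = setval v {j. Some j \<in> set h}"
| "seq_util v p \<sigma> (Suc n) h =
     (case \<sigma> h of
        None \<Rightarrow> setval v {j. Some j \<in> set h}
      | Some l \<Rightarrow> (\<Sum>j\<in>UNIV. l j * seq_util v p \<sigma> n (h @ [Some j]))
                  + (1 - (\<Sum>j\<in>UNIV. l j)) * seq_util v p \<sigma> n (h @ [None])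
                  - p l)"

definition buy_many :: "(('i::finite \<Rightarrow> real) \<Rightarrow> real) \<Rightarrow> bool" where
  "buy_many p \<longleftrightarrow> (\<forall>l\<in>lotteries. 0 \<le> p l) \<and>
     (\<forall>v. (\<forall>j. 0 \<le> v j) \<longrightarrow>
        (\<forall>\<sigma>. (\<forall>h l. \<sigma> h = Some l \<longrightarrow> l \<in> lotteries) \<longrightarrow>
           (\<forall>n. seq_util v p \<sigma> n [] \<le> (SUP l\<in>lotteries. lval v l - p l))))"

definition valid_choice :: "(('i::finite \<Rightarrow> real) \<Rightarrow> real) \<Rightarrow> ('i \<Rightarrow> real)
    \<Rightarrow> ('i \<Rightarrow> real) measure \<Rightarrow> (('i \<Rightarrow> real) \<Rightarrow> ('i \<Rightarrow> real)) \<Rightarrow> bool" where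
  "valid_choice p c D sel \<longleftrightarrow>
     (AE v in D. sel v \<in> lotteries \<and>
        (\<forall>l\<in>lotteries. lval v l - p l \<le> lval v (sel v) - p (sel v))) \<and>
     integrable D (\<lambda>v. p (sel v) - lval c (sel v))"

definition Profit :: "(('i::finite \<Rightarrow> real) \<Rightarrow> real) \<Rightarrow> ('i \<Rightarrow> real)
    \<Rightarrow> ('i \<Rightarrow> real) measure \<Rightarrow> (('i \<Rightarrow> real) \<Rightarrow> ('i \<Rightarrow> real)) \<Rightarrow> real" where
  "Profit p c D sel = (\<integral>v. (p (sel v) - lval c (sel v)) \<partial>D)"

definition SProfit :: "('i::finite \<Rightarrow> real) \<Rightarrow> ('i \<Rightarrow> real) measure \<Rightarrow> ereal" where
  "SProfit c D = (SUP qs \<in> {(q, sel). (\<forall>j. 0 \<le> q j) \<and> valid_choice (lval q) c D sel}.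
                    ereal (Profit (lval (fst qs)) c D (snd qs)))"

definition BuyManyProfit :: "('i::finite \<Rightarrow> real) \<Rightarrow> ('i \<Rightarrow> real) measure \<Rightarrow> ereal" where
  "BuyManyProfit c D = (SUP ps \<in> {(p, sel). buy_many p \<and> valid_choice p c D sel}.
                    ereal (Profit (fst ps) c D (snd ps)))"

end

theory Submission
  imports Defs
begin

lemma comp_meas: "(\<lambda>v::'i::finite\<Rightarrow>real. v j) \<in> borel_measurable borel"
  by (intro borel_measurable_continuous_onI continuous_on_product_coordinates)
lemma compd_meas: "(\<lambda>v::'i::finite\<Rightarrow>real. v j - r j) \<in> borel_measurable borel"
  using comp_meas by (intro borel_measurable_diff) auto
lemma predle: "f \<in> borel_measurable M \<Longrightarrow> g \<in> borel_measurable M \<Longrightarrow> Measurable.pred M (\<lambda>v. (f v::real) \<le> g v)"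
  by (simp add: pred_def borel_measurable_le)
lemma predless: "f \<in> borel_measurable M \<Longrightarrow> g \<in> borel_measurable M \<Longrightarrow> Measurable.pred M (\<lambda>v. (f v::real) < g v)"
  by (simp add: pred_def borel_measurable_less)

definition dlt :: "'i \<Rightarrow> ('i \<Rightarrow> real)" where "dlt j = (\<lambda>i. if i = j then 1 else 0)"

definition achoice :: "('i::finite \<Rightarrow> real) \<Rightarrow> ('i \<Rightarrow> real) \<Rightarrow> 'i \<Rightarrow> bool" where
 "achoice r v j \<longleftrightarrow> 0 < v j - r j \<and> (\<forall>i. v i - r i \<le> v j - r j) \<and>
     (\<forall>i. to_nat i < to_nat j \<longrightarrow> v i - r i < v j - r j)"

definition isel :: "('i::finite \<Rightarrow> real) \<Rightarrow> ('i \<Rightarrow> real) \<Rightarrow> ('i \<Rightarrow> real)" where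
 "isel r v = (\<lambda>j. if achoice r v j then 1 else 0)"

lemma achoice_pred: "Measurable.pred borel (\<lambda>v::'i::finite\<Rightarrow>real. achoice r v j)"
  unfolding achoice_def
  by (intro pred_intros_logic pred_intros_countable pred_intros_imp' predle predless compd_meas borel_measurable_const)

lemma achoice_unique: "achoice r v j \<Longrightarrow> achoice r v i \<Longrightarrow> i = j"
proof (rule ccontr)
  assume a: "achoice r v j" "achoice r v i" "i \<noteq> j"
  then have "to_nat i \<noteq> to_nat j" by simp
  then consider "to_nat i < to_nat j" | "to_nat j < to_nat i" by linarith
  then show False using a unfolding achoice_def by (metis not_less)
qed

lemma achoice_exists:
  fixes r v :: "'i::finite \<Rightarrow> real"
  assumes "0 < v j - r j" shows "\<exists>k. achoice r v k"
proof -
  define M where "M = Max (range (\<lambda>i. v i - r i))"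
  have fin: "finite (range (\<lambda>i. v i - r i))" by simp
  have Mge: "v i - r i \<le> M" for i unfolding M_def by (rule Max_ge[OF fin]) auto
  have "M \<in> range (\<lambda>i. v i - r i)" unfolding M_def by (rule Max_in[OF fin]) auto
  then obtain i0 where i0: "v i0 - r i0 = M" by auto
  obtain k where k: "v k - r k = M" and kmin: "\<And>y. v y - r y = M \<Longrightarrow> to_nat k \<le> to_nat y"
    using ex_has_least_nat[of "\<lambda>i. v i - r i = M" i0 to_nat] i0 by blast
  have "achoice r v k"
    unfolding achoice_def
  proof (intro conjI allI impI)
    show "0 < v k - r k" using assms Mge[of j] k by linarith
    show "v i - r i \<le> v k - r k" for i using Mge[of i] k by simp
    show "v i - r i < v k - r k" if "to_nat i < to_nat k" for i
      using Mge[of i] k kmin[of i] that by fastforce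
  qed
  then show ?thesis by blast
qed

lemma isel_cases:
  fixes r v :: "'i::finite \<Rightarrow> real"
  shows "(\<exists>j. isel r v = dlt j \<and> (\<forall>i. v i - r i \<le> v j - r j) \<and> 0 < v j - r j)
      \<or> (isel r v = (\<lambda>_. 0) \<and> (\<forall>i. v i - r i \<le> 0))"
proof (cases "\<exists>k. achoice r v k")
  case True
  then obtain k where k: "achoice r v k" by blast
  have "isel r v = dlt k"
  proof
    fix i show "isel r v i = dlt k i"
    proof (cases "i = k")
      case True then show ?thesis using k by (simp add: isel_def dlt_def)
    next
      case False then have "\<not> achoice r v i" using achoice_unique[OF k, of i] by blast
      then show ?thesis using False by (simp add: isel_def dlt_def)
    qed
  qed
  moreover have "(\<forall>i. v i - r i \<le> v k - r k) \<and> 0 < v k - r k" using k unfolding achoice_def by blast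
  ultimately show ?thesis by blast
next
  case False
  have "\<forall>i. v i - r i \<le> 0"
  proof
    fix i show "v i - r i \<le> 0"
    proof (rule ccontr)
      assume "\<not> v i - r i \<le> 0"
      then have "0 < v i - r i" by simp
      then show False using achoice_exists[of v i r] False by blast
    qed
  qed
  moreover have "isel r v = (\<lambda>_. 0)" unfolding isel_def using False by auto
  ultimately show ?thesis by blast
qed

lemma lval_dlt[simp]: "lval x (dlt j) = x j"
proof -
  have "(\<Sum>i\<in>UNIV. x i * (if i = j then 1 else 0)) = (\<Sum>i\<in>UNIV. if i = j then x i else 0)"
    by (rule sum.cong) auto
  then show ?thesis unfolding lval_def dlt_def by simp
qed

lemma lval_zero[simp]: "lval x (\<lambda>_. 0) = 0"
  unfolding lval_def by simp

lemma dlt_lott: "dlt j \<in> lotteries"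
  unfolding lotteries_def dlt_def by simp

lemma zero_lott: "(\<lambda>_. 0) \<in> lotteries"
  unfolding lotteries_def by simp

lemma isel_lott: "isel r v \<in> lotteries"
  using isel_cases[of r v]
proof
  assume "\<exists>j. isel r v = dlt j \<and> (\<forall>i. v i - r i \<le> v j - r j) \<and> 0 < v j - r j"
  then show ?thesis using dlt_lott by auto
next
  assume "isel r v = (\<lambda>_. 0) \<and> (\<forall>i. v i - r i \<le> 0)"
  then show ?thesis using zero_lott by simp
qed

lemma lval_diff: "lval v l - lval r l = (\<Sum>j\<in>UNIV. l j * (v j - r j))"
  unfolding lval_def by (simp add: sum_subtractf[symmetric] algebra_simps)

lemma lott_le_max:
  assumes "l \<in> lotteries" "\<And>j. x j \<le> M" "0 \<le> M"
  shows "(\<Sum>j\<in>UNIV. l j * x j) \<le> M"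
proof -
  have "(\<Sum>j\<in>UNIV. l j * x j) \<le> (\<Sum>j\<in>UNIV. l j * M)"
    using assms unfolding lotteries_def by (intro sum_mono mult_left_mono) auto
  also have "\<dots> = M * (\<Sum>j\<in>UNIV. l j)" by (simp add: sum_distrib_left mult.commute)
  also have "\<dots> \<le> M" using assms unfolding lotteries_def
    by (simp add: mult_left_le)
  finally show ?thesis .
qed

lemma isel_opt:
  assumes "l \<in> lotteries"
  shows "lval v l - lval r l \<le> lval v (isel r v) - lval r (isel r v)"
  using isel_cases[of r v]
proof
  assume "\<exists>j. isel r v = dlt j \<and> (\<forall>i. v i - r i \<le> v j - r j) \<and> 0 < v j - r j"
  then obtain j where j: "isel r v = dlt j" "\<forall>i. v i - r i \<le> v j - r j" "0 < v j - r j" by blast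
  show ?thesis unfolding lval_diff[of v l r] using j lott_le_max[OF assms, of "\<lambda>i. v i - r i" "v j - r j"]
    by (simp add: lval_diff[symmetric])
next
  assume z: "isel r v = (\<lambda>_. 0) \<and> (\<forall>i. v i - r i \<le> 0)"
  show ?thesis unfolding lval_diff[of v l r] using z lott_le_max[OF assms, of "\<lambda>i. v i - r i" 0]
    by simp
qed

lemma isel_meas: "(\<lambda>v. lval x (isel r v)) \<in> borel_measurable (borel :: ('i::finite \<Rightarrow> real) measure)"
proof -
  have "(\<lambda>v. lval x (isel r v)) = (\<lambda>v. \<Sum>j\<in>UNIV. x j * (if achoice r v j then 1 else 0))"
    unfolding lval_def isel_def by simp
  also have "\<dots> \<in> borel_measurable borel"
    using achoice_pred[of r] by (intro borel_measurable_sum borel_measurable_times borel_measurable_const measurable_If) (auto simp: pred_def)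
  finally show ?thesis .
qed


lemma setval_nonneg: "0 \<le> setval (v::'i::finite \<Rightarrow> real) S"
  unfolding setval_def by (rule Max_ge) auto

lemma setval_ge: "j \<in> S \<Longrightarrow> v j \<le> setval (v::'i::finite \<Rightarrow> real) S"
  unfolding setval_def by (rule Max_ge) auto

lemma seq_has:
  assumes "Some j \<in> set h"
  shows "v j \<le> seq_util v p (\<lambda>h. if Some j \<in> set h then None else Some l) n h"
proof (cases n)
  case 0 then show ?thesis using assms by (simp add: setval_ge)
next
  case (Suc m) then show ?thesis using assms by (simp add: setval_ge)
qed

lemma sum_ifj:
  fixes l :: "'i::finite \<Rightarrow> real"
  shows "(\<Sum>i\<in>UNIV. l i * (if i = j then a else b)) = l j * a + ((\<Sum>i\<in>UNIV. l i) - l j) * b"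
proof -
  have "(\<Sum>i\<in>UNIV. l i * (if i = j then a else b)) = (\<Sum>i\<in>UNIV. l i * b + (if i = j then l i * (a - b) else 0))"
    by (rule sum.cong) (auto simp: algebra_simps)
  also have "\<dots> = (\<Sum>i\<in>UNIV. l i) * b + l j * (a - b)"
    by (simp add: sum.distrib sum_distrib_right)
  finally show ?thesis by (simp add: algebra_simps)
qed

lemma seq_rep:
  fixes v l :: "'i::finite \<Rightarrow> real"
  assumes l: "l \<in> lotteries" and x: "0 < l j"
  shows "Some j \<notin> set h \<Longrightarrow> (v j - p l / l j) * (1 - (1 - l j) ^ n)
           \<le> seq_util v p (\<lambda>h. if Some j \<in> set h then None else Some l) n h"
proof (induction n arbitrary: h)
  case 0
  then show ?case by (simp add: setval_nonneg)
next
  case (Suc n)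
  define \<sigma> where "\<sigma> = (\<lambda>h. if Some j \<in> set h then (None::('i \<Rightarrow> real) option) else Some l)"
  define g where "g = (v j - p l / l j) * (1 - (1 - l j) ^ n)"
  have l0: "\<And>i. 0 \<le> l i" and l1: "(\<Sum>i\<in>UNIV. l i) \<le> 1" using l unfolding lotteries_def by auto
  have A: "l i * (if i = j then v j else g) \<le> l i * seq_util v p \<sigma> n (h @ [Some i])" for i
  proof (cases "i = j")
    case True then show ?thesis using seq_has[of j "h @ [Some i]" v p l n] l0[of i] unfolding \<sigma>_def
      by (simp add: mult_left_mono)
  next
    case False
    then have "Some j \<notin> set (h @ [Some i])" using Suc.prems by simp
    then show ?thesis using Suc.IH[of "h @ [Some i]"] l0[of i] False unfolding \<sigma>_def g_def
      by (simp add: mult_left_mono)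
  qed
  have B: "(1 - (\<Sum>i\<in>UNIV. l i)) * g \<le> (1 - (\<Sum>i\<in>UNIV. l i)) * seq_util v p \<sigma> n (h @ [None])"
    using Suc.IH[of "h @ [None]"] Suc.prems l1 unfolding \<sigma>_def g_def by (intro mult_left_mono) auto
  have "(v j - p l / l j) * (1 - (1 - l j) ^ Suc n) = l j * v j + (1 - l j) * g - p l"
    unfolding g_def using x by (simp add: field_simps)
  also have "\<dots> = (\<Sum>i\<in>UNIV. l i * (if i = j then v j else g)) + (1 - (\<Sum>i\<in>UNIV. l i)) * g - p l"
    by (simp add: sum_ifj algebra_simps)
  also have "\<dots> \<le> (\<Sum>i\<in>UNIV. l i * seq_util v p \<sigma> n (h @ [Some i])) + (1 - (\<Sum>i\<in>UNIV. l i)) * seq_util v p \<sigma> n (h @ [None]) - p l"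
    using A B by (intro diff_right_mono add_mono sum_mono) auto
  also have "\<dots> = seq_util v p \<sigma> (Suc n) h"
    using Suc.prems by (simp add: \<sigma>_def)
  finally show ?case unfolding \<sigma>_def .
qed

lemma effective:
  fixes v l :: "'i::finite \<Rightarrow> real"
  assumes bm: "buy_many p" and v: "\<forall>j. 0 \<le> v j" and l: "l \<in> lotteries" and x: "0 < l j"
  shows "v j - p l / l j \<le> (SUP l\<in>lotteries. lval v l - p l)"
proof -
  define \<sigma> where "\<sigma> = (\<lambda>h. if Some j \<in> set h then (None::('i \<Rightarrow> real) option) else Some l)"
  have \<sigma>l: "\<forall>h l'. \<sigma> h = Some l' \<longrightarrow> l' \<in> lotteries" using l unfolding \<sigma>_def by auto
  have le: "(v j - p l / l j) * (1 - (1 - l j) ^ n) \<le> (SUP l\<in>lotteries. lval v l - p l)" for n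
  proof -
    have "seq_util v p \<sigma> n [] \<le> (SUP l\<in>lotteries. lval v l - p l)"
      using bm v \<sigma>l unfolding buy_many_def by blast
    moreover have "(v j - p l / l j) * (1 - (1 - l j) ^ n) \<le> seq_util v p \<sigma> n []"
      using seq_rep[OF l x, of "[]" v p n] unfolding \<sigma>_def by simp
    ultimately show ?thesis by linarith
  qed
  have l1: "l j \<le> 1"
  proof -
    have "l j \<le> (\<Sum>i\<in>UNIV. l i)" using l unfolding lotteries_def by (intro member_le_sum) auto
    then show ?thesis using l unfolding lotteries_def by auto
  qed
  have "(\<lambda>n. (v j - p l / l j) * (1 - (1 - l j) ^ n)) \<longlonglongrightarrow> (v j - p l / l j) * (1 - 0)"
    using x l1 by (intro tendsto_intros LIMSEQ_power_zero) auto
  then show ?thesis using le by (intro LIMSEQ_le_const2) auto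
qed

definition sval :: "(('i::finite \<Rightarrow> real) \<Rightarrow> real) \<Rightarrow> 'i \<Rightarrow> real" where
  "sval p j = Inf ((\<lambda>l. p l / l j) ` {l \<in> lotteries. 0 < l j})"

lemma sval_ne: "(\<lambda>l. p l / l j) ` {l \<in> lotteries. 0 < l j} \<noteq> {}"
  using dlt_lott[of j] by (auto simp: dlt_def)

lemma sval_bdd:
  assumes "\<forall>l\<in>lotteries. 0 \<le> p l"
  shows "bdd_below ((\<lambda>l. p l / l j) ` {l \<in> lotteries. 0 < l j})"
  using assms by (intro bdd_belowI[of _ 0]) auto

lemma sval_nonneg:
  assumes "\<forall>l\<in>lotteries. 0 \<le> p l"
  shows "0 \<le> sval p j"
  unfolding sval_def using assms sval_ne by (intro cInf_greatest) auto

lemma sval_le: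
  assumes "\<forall>l\<in>lotteries. 0 \<le> p l" and l: "l \<in> lotteries"
  shows "l j * sval p j \<le> p l"
proof -
  have l0: "0 \<le> l j" using l unfolding lotteries_def by auto
  show ?thesis
  proof (cases "l j = 0")
    case True then show ?thesis using assms by simp
  next
    case False
    then have pos: "0 < l j" using l0 by simp
    have "sval p j \<le> p l / l j"
      unfolding sval_def using sval_bdd[OF assms(1)] l pos by (intro cInf_lower) auto
    then show ?thesis using pos by (simp add: pos_le_divide_eq mult.commute)
  qed
qed

lemma sval_eff:
  fixes v :: "'i::finite \<Rightarrow> real"
  assumes bm: "buy_many p" and v: "\<forall>j. 0 \<le> v j"
  shows "v j - sval p j \<le> (SUP l\<in>lotteries. lval v l - p l)"
proof -
  let ?u = "(SUP l\<in>lotteries. lval v l - p l)"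
  have "v j - ?u \<le> sval p j"
    unfolding sval_def using sval_ne
  proof (intro cInf_greatest)
    fix y assume "y \<in> (\<lambda>l. p l / l j) ` {l \<in> lotteries. 0 < l j}"
    then obtain l where "l \<in> lotteries" "0 < l j" "y = p l / l j" by auto
    then show "v j - ?u \<le> y" using effective[OF bm v, of l j] by simp
  qed auto
  then show ?thesis by simp
qed

lemma u_nonneg:
  fixes v :: "'i::finite \<Rightarrow> real"
  assumes bm: "buy_many p" and v: "\<forall>j. 0 \<le> v j"
  shows "0 \<le> (SUP l\<in>lotteries. lval v l - p l)"
proof -
  have H: "\<forall>v. (\<forall>j. 0 \<le> v j) \<longrightarrow>
        (\<forall>\<sigma>. (\<forall>h l. \<sigma> h = Some l \<longrightarrow> l \<in> lotteries) \<longrightarrow>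
           (\<forall>n. seq_util v p \<sigma> n [] \<le> (SUP l\<in>lotteries. lval v l - p l)))"
    using bm unfolding buy_many_def by (rule conjunct2)
  have "seq_util v p (\<lambda>h. None) 0 [] \<le> (SUP l\<in>lotteries. lval v l - p l)"
    by (rule H[rule_format]) (simp_all add: v)
  then show ?thesis by (simp add: setval_def)
qed


definition ipr :: "('i::finite \<Rightarrow> real) \<Rightarrow> ('i \<Rightarrow> real) \<Rightarrow> real \<Rightarrow> ('i \<Rightarrow> real)" where
  "ipr c s t = (\<lambda>j. c j + t * s j)"

definition prof :: "('i::finite \<Rightarrow> real) \<Rightarrow> ('i \<Rightarrow> real) \<Rightarrow> real \<Rightarrow> ('i \<Rightarrow> real) \<Rightarrow> real" where
  "prof c s t v = lval (ipr c s t) (isel (ipr c s t) v) - lval c (isel (ipr c s t) v)"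

definition wu :: "('i::finite \<Rightarrow> real) \<Rightarrow> ('i \<Rightarrow> real) \<Rightarrow> real \<Rightarrow> ('i \<Rightarrow> real) \<Rightarrow> real" where
  "wu c s t v = lval v (isel (ipr c s t) v) - lval (ipr c s t) (isel (ipr c s t) v)"

lemma wu_ge_lott: "l \<in> lotteries \<Longrightarrow> lval v l - lval (ipr c s t) l \<le> wu c s t v"
  unfolding wu_def by (rule isel_opt)

lemma wu_ge_j: "v j - (c j + t * s j) \<le> wu c s t v"
  using wu_ge_lott[OF dlt_lott[of j], of v c s t] by (simp add: ipr_def)

lemma wu_nonneg: "0 \<le> wu c s t v"
  using wu_ge_lott[OF zero_lott, of v c s t] by simp

lemma prof_nonneg:
  assumes "0 \<le> t" "\<forall>j. 0 \<le> s j"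
  shows "0 \<le> prof c s t v"
  using isel_cases[of "ipr c s t" v]
proof
  assume "\<exists>j. isel (ipr c s t) v = dlt j \<and> (\<forall>i. v i - ipr c s t i \<le> v j - ipr c s t j) \<and> 0 < v j - ipr c s t j"
  then obtain j where "isel (ipr c s t) v = dlt j" by blast
  then show ?thesis using assms unfolding prof_def by (simp add: ipr_def)
next
  assume "isel (ipr c s t) v = (\<lambda>_. 0) \<and> (\<forall>i. v i - ipr c s t i \<le> 0)"
  then show ?thesis unfolding prof_def by simp
qed

lemma wu_step:
  assumes "0 \<le> t" "1 \<le> \<rho>"
  shows "wu c s t v - wu c s (\<rho> * t) v \<le> (\<rho> - 1) * prof c s t v"
  using isel_cases[of "ipr c s t" v]
proof
  assume "\<exists>j. isel (ipr c s t) v = dlt j \<and> (\<forall>i. v i - ipr c s t i \<le> v j - ipr c s t j) \<and> 0 < v j - ipr c s t j"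
  then obtain j where j: "isel (ipr c s t) v = dlt j" by blast
  have "v j - (c j + (\<rho> * t) * s j) \<le> wu c s (\<rho> * t) v" by (rule wu_ge_j)
  then show ?thesis using j unfolding prof_def wu_def by (simp add: ipr_def algebra_simps)
next
  assume "isel (ipr c s t) v = (\<lambda>_. 0) \<and> (\<forall>i. v i - ipr c s t i \<le> 0)"
  then show ?thesis using wu_nonneg[of c s "\<rho> * t" v] unfolding prof_def wu_def by simp
qed

lemma wu_upper:
  fixes v :: "'i::finite \<Rightarrow> real"
  assumes bm: "buy_many p" and v: "\<forall>j. 0 \<le> v j" and c: "\<forall>j. 0 \<le> c j"
  shows "wu c (sval p) 1 v \<le> (SUP l\<in>lotteries. lval v l - p l)"
  using isel_cases[of "ipr c (sval p) 1" v]
proof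
  assume "\<exists>j. isel (ipr c (sval p) 1) v = dlt j \<and> (\<forall>i. v i - ipr c (sval p) 1 i \<le> v j - ipr c (sval p) 1 j) \<and> 0 < v j - ipr c (sval p) 1 j"
  then obtain j where j: "isel (ipr c (sval p) 1) v = dlt j" by blast
  have "wu c (sval p) 1 v = v j - (c j + sval p j)" using j unfolding wu_def by (simp add: ipr_def)
  also have "\<dots> \<le> v j - sval p j" using c by simp
  also have "\<dots> \<le> (SUP l\<in>lotteries. lval v l - p l)" by (rule sval_eff[OF bm v])
  finally show ?thesis .
next
  assume "isel (ipr c (sval p) 1) v = (\<lambda>_. 0) \<and> (\<forall>i. v i - ipr c (sval p) 1 i \<le> 0)"
  then show ?thesis using u_nonneg[OF bm v] unfolding wu_def by simp
qed

lemma lval_ipr: "lval (ipr c s t) l = lval c l + t * lval s l"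
  unfolding lval_def ipr_def by (simp add: algebra_simps sum.distrib sum_distrib_left)

lemma lval_2: "lval (\<lambda>j. 2 * c j) l = 2 * lval c l"
  unfolding lval_def by (simp add: sum_distrib_left mult.assoc)

lemma lval_sval:
  assumes "\<forall>l\<in>lotteries. 0 \<le> p l" "lam \<in> lotteries"
  shows "lval (sval p) lam \<le> real CARD('i) * p (lam :: 'i::finite \<Rightarrow> real)"
proof -
  have "lval (sval p) lam \<le> (\<Sum>j\<in>(UNIV::'i set). p lam)"
    unfolding lval_def using sval_le[OF assms] by (intro sum_mono) (simp add: mult.commute)
  then show ?thesis by simp
qed

lemma sup_eq:
  assumes "lam \<in> lotteries" "\<forall>l\<in>lotteries. f l \<le> f lam"
  shows "(SUP l\<in>lotteries. f l) = (f lam :: real)"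
  using assms by (intro cSup_eq_maximum) auto

lemma pointwise:
  fixes v :: "'i::finite \<Rightarrow> real"
  assumes bm: "buy_many p" and v: "\<forall>j. 0 \<le> v j" and c: "\<forall>j. 0 \<le> c j"
    and lam: "lam \<in> lotteries" and opt: "\<forall>l\<in>lotteries. lval v l - p l \<le> lval v lam - p lam"
    and \<rho>: "1 \<le> \<rho>" and K: "2 * real CARD('i) \<le> \<rho> ^ K"
  shows "p lam - lval (\<lambda>j. 2 * c j) lam \<le> 2 * (\<rho> - 1) * (\<Sum>k<K. prof c (sval p) (\<rho> ^ k / \<rho> ^ K) v)"
proof -
  define s where "s = sval p"
  define t where "t = (\<lambda>k::nat. \<rho> ^ k / \<rho> ^ K)"
  have pnn: "\<forall>l\<in>lotteries. 0 \<le> p l" using bm unfolding buy_many_def by blast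
  have P0: "0 \<le> p lam" using pnn lam by blast
  have rpos: "0 < \<rho> ^ K" using \<rho> by simp
  have u: "(SUP l\<in>lotteries. lval v l - p l) = lval v lam - p lam"
    using sup_eq[OF lam, of "\<lambda>l. lval v l - p l"] opt by simp
  have tS: "t (Suc k) = \<rho> * t k" for k unfolding t_def by simp
  have t0: "0 \<le> t k" for k unfolding t_def using \<rho> by simp
  have step: "wu c s (t k) v - wu c s (t (Suc k)) v \<le> (\<rho> - 1) * prof c s (t k) v" for k
    unfolding tS by (rule wu_step[OF t0 \<rho>])
  have "wu c s (t 0) v - wu c s (t K) v = (\<Sum>k<K. wu c s (t k) v - wu c s (t (Suc k)) v)"
    by (rule sum_lessThan_telescope'[symmetric])
  also have "\<dots> \<le> (\<Sum>k<K. (\<rho> - 1) * prof c s (t k) v)"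
    by (intro sum_mono step)
  also have "\<dots> = (\<rho> - 1) * (\<Sum>k<K. prof c s (t k) v)"
    by (simp add: sum_distrib_left)
  finally have tel: "wu c s (t 0) v - wu c s (t K) v \<le> (\<rho> - 1) * (\<Sum>k<K. prof c s (t k) v)" .
  have tK: "t K = 1" unfolding t_def using rpos by (metis less_irrefl divide_self)
  have upper: "wu c s (t K) v \<le> lval v lam - p lam"
    using wu_upper[OF bm v c] u unfolding tK s_def by simp
  have "lval v lam - lval (ipr c s (t 0)) lam \<le> wu c s (t 0) v"
    by (rule wu_ge_lott[OF lam])
  moreover have "lval (ipr c s (t 0)) lam = lval c lam + t 0 * lval s lam" by (rule lval_ipr)
  moreover have "t 0 * lval s lam \<le> p lam / 2"
  proof -
    have a: "lval s lam \<le> real CARD('i) * p lam" unfolding s_def by (rule lval_sval[OF pnn lam])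
    have "t 0 * lval s lam \<le> t 0 * (real CARD('i) * p lam)"
      using a t0[of 0] by (rule mult_left_mono)
    also have "\<dots> = (real CARD('i) * p lam) / \<rho> ^ K" unfolding t_def by simp
    also have "\<dots> \<le> p lam / 2"
    proof -
      have "2 * (real CARD('i) * p lam) \<le> \<rho> ^ K * p lam"
        using mult_right_mono[OF K P0] by (simp add: algebra_simps)
      then show ?thesis using rpos by (simp add: field_simps)
    qed
    finally show ?thesis .
  qed
  ultimately have lower: "lval v lam - lval c lam - p lam / 2 \<le> wu c s (t 0) v" by linarith
  have "p lam - lval (\<lambda>j. 2 * c j) lam = 2 * (p lam / 2 - lval c lam)" by (simp add: lval_2)
  also have "\<dots> \<le> 2 * (wu c s (t 0) v - wu c s (t K) v)"
  proof -
    have "p lam / 2 - lval c lam \<le> wu c s (t 0) v - wu c s (t K) v" using lower upper by linarith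
    then show ?thesis by simp
  qed
  also have "\<dots> \<le> 2 * ((\<rho> - 1) * (\<Sum>k<K. prof c s (t k) v))" using tel by simp
  finally show ?thesis unfolding s_def t_def by (simp only: mult.assoc)
qed


lemma prof_int:
  fixes D :: "('i::finite \<Rightarrow> real) measure"
  assumes "prob_space D" "sets D = sets borel"
  shows "integrable D (prof c s t)"
proof -
  interpret P: prob_space D by (rule assms(1))
  define B where "B = (\<Sum>j\<in>UNIV. \<bar>ipr c s t j - c j\<bar>)"
  have meas: "prof c s t \<in> borel_measurable D"
  proof -
    have "(\<lambda>v. lval (ipr c s t) (isel (ipr c s t) v) - lval c (isel (ipr c s t) v)) \<in> borel_measurable borel"
      by (intro borel_measurable_diff isel_meas)
    moreover have "prof c s t = (\<lambda>v. lval (ipr c s t) (isel (ipr c s t) v) - lval c (isel (ipr c s t) v))"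
      by (rule ext) (simp add: prof_def)
    moreover have "borel_measurable D = borel_measurable borel"
      by (rule measurable_cong_sets[OF assms(2) refl])
    ultimately show ?thesis by metis
  qed
  have bnd: "norm (prof c s t v) \<le> B" for v
    using isel_cases[of "ipr c s t" v]
  proof
    assume "\<exists>j. isel (ipr c s t) v = dlt j \<and> (\<forall>i. v i - ipr c s t i \<le> v j - ipr c s t j) \<and> 0 < v j - ipr c s t j"
    then obtain j where j: "isel (ipr c s t) v = dlt j" by blast
    have "\<bar>ipr c s t j - c j\<bar> \<le> B" unfolding B_def by (rule member_le_sum) auto
    then show ?thesis using j unfolding prof_def by simp
  next
    assume "isel (ipr c s t) v = (\<lambda>_. 0) \<and> (\<forall>i. v i - ipr c s t i \<le> 0)"
    then show ?thesis unfolding prof_def B_def by (simp add: sum_nonneg)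
  qed
  show ?thesis by (rule P.integrable_const_bound[where B=B]) (use bnd meas in auto)
qed

lemma sprofit_lower:
  fixes D :: "('i::finite \<Rightarrow> real) measure"
  assumes "prob_space D" "sets D = sets borel" "\<forall>j. 0 \<le> c j" "\<forall>j. 0 \<le> s j" "0 \<le> t"
  shows "ereal (integral\<^sup>L D (prof c s t)) \<le> SProfit c D"
proof -
  let ?r = "ipr c s t"
  have r0: "\<forall>j. 0 \<le> ?r j" using assms(3-5) unfolding ipr_def by simp
  have vc: "valid_choice (lval ?r) c D (isel ?r)"
    unfolding valid_choice_def
  proof
    show "AE v in D. isel ?r v \<in> lotteries \<and> (\<forall>l\<in>lotteries. lval v l - lval ?r l \<le> lval v (isel ?r v) - lval ?r (isel ?r v))"
      by (intro AE_I2) (simp add: isel_lott isel_opt)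
    show "integrable D (\<lambda>v. lval ?r (isel ?r v) - lval c (isel ?r v))"
      using prof_int[OF assms(1,2), of c s t] unfolding prof_def by simp
  qed
  have "(?r, isel ?r) \<in> {(q, sel). (\<forall>j. 0 \<le> q j) \<and> valid_choice (lval q) c D sel}"
    using r0 vc by simp
  then have "ereal (Profit (lval (fst (?r, isel ?r))) c D (snd (?r, isel ?r))) \<le> SProfit c D"
    unfolding SProfit_def by (rule SUP_upper)
  moreover have "Profit (lval ?r) c D (isel ?r) = integral\<^sup>L D (prof c s t)"
    unfolding Profit_def prof_def by simp
  ultimately show ?thesis by simp
qed

lemma exists_K:
  assumes "0 < L" "a < exp L"
  shows "\<exists>K::nat. 1 \<le> K \<and> a \<le> (1 + L / real K) ^ K"
proof -
  have "(\<lambda>n. (1 + L / real n) ^ n) \<longlonglongrightarrow> exp L" by (rule tendsto_exp_limit_sequentially)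
  then have "eventually (\<lambda>n. a < (1 + L / real n) ^ n) sequentially"
    using assms(2) by (rule order_tendstoD(1))
  then obtain N where N: "\<And>n. n \<ge> N \<Longrightarrow> a < (1 + L / real n) ^ n"
    unfolding eventually_sequentially by blast
  have "a < (1 + L / real (Suc N)) ^ (Suc N)" by (rule N) simp
  then show ?thesis by (intro exI[of _ "Suc N"]) simp
qed

lemma exists_index:
  fixes a :: "nat \<Rightarrow> real"
  assumes "1 \<le> K"
  shows "\<exists>k<K. (\<Sum>i<K. a i) \<le> real K * a k"
proof (rule ccontr)
  assume "\<not> ?thesis"
  then have lt: "\<And>k. k < K \<Longrightarrow> real K * a k < (\<Sum>i<K. a i)" by (simp add: not_le)
  have "(\<Sum>k<K. real K * a k) < (\<Sum>k<K. (\<Sum>i<K. a i))"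
  proof (rule sum_strict_mono)
    have "0 \<in> {..<K}" using assms by simp
    then show "{..<K} \<noteq> {}" by blast
  qed (auto intro: lt)
  then show False by (simp add: sum_distrib_left)
qed

theorem theorem6:
  fixes D :: "('i::finite \<Rightarrow> real) measure" and c :: "'i \<Rightarrow> real"
  assumes "prob_space D"
    and "sets D = sets borel"
    and "AE v in D. \<forall>j. 0 \<le> v j"
    and "\<forall>j. 0 \<le> c j"
  shows "BuyManyProfit (\<lambda>j. 2 * c j) D
           \<le> ereal (2 * ln (4 * real CARD('i))) * SProfit c D"
proof -
  interpret P: prob_space D by (rule assms(1))
  define L where "L = ln (4 * real CARD('i))"
  have card1: "1 \<le> real CARD('i)" by simp
  have "1 < 4 * real CARD('i)" using card1 by linarith
  then have Lpos: "0 < L" unfolding L_def by (rule ln_gt_zero)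
  have "2 * real CARD('i) < exp L" unfolding L_def using card1 by simp
  then obtain K :: nat where K1: "1 \<le> K" and KK: "2 * real CARD('i) \<le> (1 + L / real K) ^ K"
    using exists_K[OF Lpos] by blast
  define \<rho> where "\<rho> = 1 + L / real K"
  have \<rho>1: "1 \<le> \<rho>" unfolding \<rho>_def using Lpos by simp
  have \<rho>K: "(\<rho> - 1) * real K = L" unfolding \<rho>_def using K1 by simp
  have \<rho>KK: "2 * real CARD('i) \<le> \<rho> ^ K" using KK unfolding \<rho>_def .
  show ?thesis
    unfolding BuyManyProfit_def L_def[symmetric]
  proof (rule SUP_least)
    fix ps assume "ps \<in> {(p, sel). buy_many p \<and> valid_choice p (\<lambda>j. 2 * c j) D sel}"
    then obtain p sel where ps: "ps = (p, sel)" and bm: "buy_many p"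
      and vc: "valid_choice p (\<lambda>j. 2 * c j) D sel" by auto
    have pnn: "\<forall>l\<in>lotteries. 0 \<le> p l" using bm unfolding buy_many_def by blast
    define pr where "pr = (\<lambda>k::nat. prof c (sval p) (\<rho> ^ k / \<rho> ^ K))"
    define f where "f = (\<lambda>v. p (sel v) - lval (\<lambda>j. 2 * c j) (sel v))"
    have fint: "integrable D f" using vc unfolding valid_choice_def f_def by blast
    have print: "integrable D (pr k)" for k unfolding pr_def by (rule prof_int[OF assms(1,2)])
    have AEopt: "AE v in D. sel v \<in> lotteries \<and> (\<forall>l\<in>lotteries. lval v l - p l \<le> lval v (sel v) - p (sel v))"
      using vc unfolding valid_choice_def by blast
    have AEpt: "AE v in D. f v \<le> 2 * (\<rho> - 1) * (\<Sum>k<K. pr k v)"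
      using AEopt assms(3)
    proof eventually_elim
      case (elim v)
      then show ?case unfolding f_def pr_def
        using pointwise[OF bm _ assms(4) _ _ \<rho>1 \<rho>KK, of v "sel v"] by blast
    qed
    have "integral\<^sup>L D f \<le> integral\<^sup>L D (\<lambda>v. 2 * (\<rho> - 1) * (\<Sum>k<K. pr k v))"
      using fint print AEpt by (intro integral_mono_AE) auto
    also have "\<dots> = 2 * (\<rho> - 1) * (\<Sum>k<K. integral\<^sup>L D (pr k))"
      using print by (simp add: Bochner_Integration.integral_sum)
    finally have I1: "integral\<^sup>L D f \<le> 2 * (\<rho> - 1) * (\<Sum>k<K. integral\<^sup>L D (pr k))" .
    obtain k where k: "k < K" and kk: "(\<Sum>i<K. integral\<^sup>L D (pr i)) \<le> real K * integral\<^sup>L D (pr k)"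
      using exists_index[OF K1] by blast
    have "integral\<^sup>L D f \<le> 2 * (\<rho> - 1) * (real K * integral\<^sup>L D (pr k))"
      using I1 kk \<rho>1 by (meson mult_left_mono order_trans zero_le_mult_iff diff_ge_0_iff_ge zero_le_numeral)
    also have "\<dots> = 2 * ((\<rho> - 1) * real K) * integral\<^sup>L D (pr k)" by (simp only: mult.assoc)
    also have "\<dots> = 2 * L * integral\<^sup>L D (pr k)" by (simp only: \<rho>K)
    finally have I2: "integral\<^sup>L D f \<le> 2 * L * integral\<^sup>L D (pr k)" .
    have sp: "ereal (integral\<^sup>L D (pr k)) \<le> SProfit c D"
      unfolding pr_def
      by (rule sprofit_lower[OF assms(1,2,4)]) (use sval_nonneg[OF pnn] \<rho>1 in auto)
    have "ereal (Profit (fst ps) (\<lambda>j. 2 * c j) D (snd ps)) = ereal (integral\<^sup>L D f)"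
      unfolding ps Profit_def f_def by simp
    also have "\<dots> \<le> ereal (2 * L) * ereal (integral\<^sup>L D (pr k))" using I2 by simp
    also have "\<dots> \<le> ereal (2 * L) * SProfit c D"
      using sp Lpos by (intro ereal_mult_left_mono) auto
    finally show "ereal (Profit (fst ps) (\<lambda>j. 2 * c j) D (snd ps)) \<le> ereal (2 * L) * SProfit c D" .
  qed
qed

end
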